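(* Let $\Gamma_n=\{P_1,\ldots,P_k\}$ with $k\ge 2$ and let $Q$ be a minimal witness of $\Gamma_n$. Then $|Q|\le n(k-1)+1$.
   Context: $\Gamma_n$ is a set of $k$ pairwise non-isomorphic (unlabelled) posets each of size $n$. A downset is a downward-closed subset; $D_n(Q)$ is the set of downsets of $Q$ of size $n$ up to isomorphism. $Q$ is a witness of $\Gamma_n$ if $D_n(Q)=\Gamma_n$, and a minimal witness if no proper downset of $Q$ is a witness of $\Gamma_n$. *)

theory Defs
  imports Main
begin

type_synonym 'a poset = "'a set \<times> ('a \<Rightarrow> 'a \<Rightarrow> bool)"

definition is_poset :: "'a poset \<Rightarrow> bool" where
  "is_poset P \<longleftrightarrow> finite (fst P) \<and>
     (\<forall>x\<in>fst P. snd P x x) \<and>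
     (\<forall>x\<in>fst P. \<forall>y\<in>fst P. snd P x y \<and> snd P y x \<longrightarrow> x = y) \<and>
     (\<forall>x\<in>fst P. \<forall>y\<in>fst P. \<forall>z\<in>fst P. snd P x y \<and> snd P y z \<longrightarrow> snd P x z)"

definition poset_iso :: "'a poset \<Rightarrow> 'b poset \<Rightarrow> bool" where
  "poset_iso P R \<longleftrightarrow> (\<exists>f. bij_betw f (fst P) (fst R) \<and>
     (\<forall>x\<in>fst P. \<forall>y\<in>fst P. snd P x y \<longleftrightarrow> snd R (f x) (f y)))"

definition is_downset :: "'a poset \<Rightarrow> 'a set \<Rightarrow> bool" where
  "is_downset P D \<longleftrightarrow> D \<subseteq> fst P \<and> (\<forall>x\<in>D. \<forall>y\<in>fst P. snd P y x \<longrightarrow> y \<in> D)"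

definition subposet :: "'a poset \<Rightarrow> 'a set \<Rightarrow> 'a poset" where
  "subposet P D = (D, snd P)"

definition is_witness :: "nat \<Rightarrow> 'b poset set \<Rightarrow> 'a poset \<Rightarrow> bool" where
  "is_witness n \<Gamma> Q \<longleftrightarrow>
     (\<forall>D. is_downset Q D \<and> card D = n \<longrightarrow> (\<exists>P\<in>\<Gamma>. poset_iso (subposet Q D) P)) \<and>
     (\<forall>P\<in>\<Gamma>. \<exists>D. is_downset Q D \<and> card D = n \<and> poset_iso (subposet Q D) P)"

definition is_minimal_witness :: "nat \<Rightarrow> 'b poset set \<Rightarrow> 'a poset \<Rightarrow> bool" where
  "is_minimal_witness n \<Gamma> Q \<longleftrightarrow> is_witness n \<Gamma> Q \<and>
     (\<forall>D. is_downset Q D \<and> D \<noteq> fst Q \<longrightarrow> \<not> is_witness n \<Gamma> (subposet Q D))"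

end

theory Submission
  imports Defs
begin

lemma min_exists:
  fixes r :: "'a \<Rightarrow> 'a \<Rightarrow> bool"
  assumes "finite S" "S \<noteq> {}" "S \<subseteq> A"
    and anti: "\<forall>x\<in>A. \<forall>y\<in>A. r x y \<and> r y x \<longrightarrow> x = y"
    and tr: "\<forall>x\<in>A. \<forall>y\<in>A. \<forall>z\<in>A. r x y \<and> r y z \<longrightarrow> r x z"
  shows "\<exists>x\<in>S. \<forall>y\<in>S. r y x \<longrightarrow> y = x"
  using assms(1,2,3)
proof (induction S rule: finite_ne_induct)
  case (singleton x)
  then show ?case by auto
next
  case (insert a S)
  then obtain x where x: "x \<in> S" "\<forall>y\<in>S. r y x \<longrightarrow> y = x" by auto
  show ?case
  proof (cases "r a x")
    case True
    have "\<forall>y\<in>insert a S. r y a \<longrightarrow> y = a"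
    proof (intro ballI impI)
      fix y assume y: "y \<in> insert a S" "r y a"
      show "y = a"
      proof (cases "y = a")
        case False
        then have "y \<in> S" using y by auto
        then have "r y x" using tr y True x insert.prems by blast
        then have "y = x" using x \<open>y \<in> S\<close> by auto
        then have "x = a" using anti y True x insert.prems by blast
        then show ?thesis using \<open>y = x\<close> by simp
      qed
    qed
    then show ?thesis by auto
  next
    case False
    then show ?thesis using x by auto
  qed
qed

lemma iso_sym:
  assumes "poset_iso P R" shows "poset_iso R P"
proof -
  obtain f where f: "bij_betw f (fst P) (fst R)"
    "\<forall>x\<in>fst P. \<forall>y\<in>fst P. snd P x y \<longleftrightarrow> snd R (f x) (f y)"
    using assms unfolding poset_iso_def by blast
  define g where "g = the_inv_into (fst P) f"
  have g: "bij_betw g (fst R) (fst P)" unfolding g_def using f(1) by (rule bij_betw_the_inv_into)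
  have fg: "\<And>x. x \<in> fst R \<Longrightarrow> f (g x) = x" unfolding g_def
    using f(1) f_the_inv_into_f_bij_betw by metis
  have "\<forall>x\<in>fst R. \<forall>y\<in>fst R. snd R x y \<longleftrightarrow> snd P (g x) (g y)"
  proof (intro ballI)
    fix x y assume "x \<in> fst R" "y \<in> fst R"
    then have "g x \<in> fst P" "g y \<in> fst P" using g bij_betwE by blast+
    then show "snd R x y \<longleftrightarrow> snd P (g x) (g y)" using f(2) fg \<open>x \<in> fst R\<close> \<open>y \<in> fst R\<close> by metis
  qed
  then show ?thesis unfolding poset_iso_def using g by blast
qed

lemma iso_trans:
  assumes "poset_iso P R" "poset_iso R S" shows "poset_iso P S"
proof -
  obtain f where f: "bij_betw f (fst P) (fst R)"
    "\<forall>x\<in>fst P. \<forall>y\<in>fst P. snd P x y \<longleftrightarrow> snd R (f x) (f y)"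
    using assms(1) unfolding poset_iso_def by blast
  obtain g where g: "bij_betw g (fst R) (fst S)"
    "\<forall>x\<in>fst R. \<forall>y\<in>fst R. snd R x y \<longleftrightarrow> snd S (g x) (g y)"
    using assms(2) unfolding poset_iso_def by blast
  have "bij_betw (g \<circ> f) (fst P) (fst S)" using f(1) g(1) bij_betw_trans by blast
  moreover have "\<forall>x\<in>fst P. \<forall>y\<in>fst P. snd P x y \<longleftrightarrow> snd S ((g \<circ> f) x) ((g \<circ> f) y)"
  proof (intro ballI)
    fix x y assume xy: "x \<in> fst P" "y \<in> fst P"
    then have "f x \<in> fst R" "f y \<in> fst R" using f(1) bij_betwE by blast+
    then have "snd R (f x) (f y) \<longleftrightarrow> snd S (g (f x)) (g (f y))" using g(2) by blast
    then show "snd P x y \<longleftrightarrow> snd S ((g \<circ> f) x) ((g \<circ> f) y)" using f(2) xy by simp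
  qed
  ultimately show ?thesis unfolding poset_iso_def by blast
qed

lemma swap:
  assumes P: "is_poset Q" and D: "is_downset Q D" and D': "is_downset Q D'"
    and cD: "card D = n" and cD': "card D' = n" and small: "card (D \<inter> D') + 2 \<le> n"
  shows "\<exists>E. is_downset Q E \<and> card E = n \<and> card (D \<inter> D') < card (E \<inter> D)
           \<and> card (D \<inter> D') < card (E \<inter> D')"
proof -
  let ?r = "snd Q" and ?A = "fst Q"
  have fin: "finite ?A" using P unfolding is_poset_def by auto
  have anti: "\<forall>x\<in>?A. \<forall>y\<in>?A. ?r x y \<and> ?r y x \<longrightarrow> x = y"
   and tr: "\<forall>x\<in>?A. \<forall>y\<in>?A. \<forall>z\<in>?A. ?r x y \<and> ?r y z \<longrightarrow> ?r x z"
    using P unfolding is_poset_def by blast+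
  have anti': "\<forall>x\<in>?A. \<forall>y\<in>?A. (\<lambda>a b. ?r b a) x y \<and> (\<lambda>a b. ?r b a) y x \<longrightarrow> x = y"
    using anti by blast
  have tr': "\<forall>x\<in>?A. \<forall>y\<in>?A. \<forall>z\<in>?A. (\<lambda>a b. ?r b a) x y \<and> (\<lambda>a b. ?r b a) y z \<longrightarrow> (\<lambda>a b. ?r b a) x z"
    using tr by blast
  have DA: "D \<subseteq> ?A" and D'A: "D' \<subseteq> ?A" using D D' unfolding is_downset_def by auto
  have fD: "finite D" "finite D'" using DA D'A fin finite_subset by auto
  have c1: "card (D - D') = n - card (D \<inter> D')" using card_Diff_subset_Int[of D D'] fD cD by simp
  have c2: "card (D' - D) = n - card (D \<inter> D')" using card_Diff_subset_Int[of D' D] fD cD' by (simp add: Int_commute)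
  have g1: "card (D - D') \<ge> 2" using c1 small by simp
  then have ne1: "D - D' \<noteq> {}" by (metis card.empty not_numeral_le_zero)
  have g2: "card (D' - D) \<ge> 2" using c2 small by simp
  then have ne2: "D' - D \<noteq> {}" by (metis card.empty not_numeral_le_zero)
  obtain x where x: "x \<in> D - D'" "\<forall>y\<in>D - D'. ?r y x \<longrightarrow> y = x"
    using min_exists[OF _ ne1 _ anti tr] fD DA by blast
  obtain z where z: "z \<in> D' - D" "\<forall>y\<in>D' - D. ?r z y \<longrightarrow> y = z"
    using min_exists[OF _ ne2 _ anti' tr'] fD D'A by blast
  define E where "E = (D' - {z}) \<union> {x}"
  have Ed: "is_downset Q E"
    unfolding is_downset_def
  proof (intro conjI ballI impI)
    show "E \<subseteq> ?A" using DA D'A x unfolding E_def by auto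
  next
    fix w y assume w: "w \<in> E" and y: "y \<in> ?A" and ryw: "?r y w"
    show "y \<in> E"
    proof (cases "w = x")
      case True
      then have "y \<in> D" using D x y ryw unfolding is_downset_def by auto
      show ?thesis
      proof (cases "y \<in> D'")
        case True
        then show ?thesis using z \<open>y \<in> D\<close> unfolding E_def by auto
      next
        case False
        then show ?thesis using x \<open>y \<in> D\<close> ryw \<open>w = x\<close> unfolding E_def by auto
      qed
    next
      case False
      then have wD': "w \<in> D'" "w \<noteq> z" using w unfolding E_def by auto
      then have "y \<in> D'" using D' y ryw unfolding is_downset_def by auto
      have "y \<noteq> z"
      proof
        assume "y = z"
        show False
        proof (cases "w \<in> D")
          case True
          then have "z \<in> D" using D y ryw \<open>y = z\<close> unfolding is_downset_def by auto
          then show False using z by auto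
        next
          case False
          then show False using z wD' ryw \<open>y = z\<close> by auto
        qed
      qed
      then show ?thesis using \<open>y \<in> D'\<close> unfolding E_def by auto
    qed
  qed
  have n1: "n \<ge> 1" using small by auto
  have cz: "card (D' - {z}) = n - 1" using cD' z by auto
  have "E = insert x (D' - {z})" unfolding E_def by auto
  moreover have "x \<notin> D' - {z}" using x by auto
  ultimately have cE: "card E = n" using cz fD n1 by simp
  have "insert x (D \<inter> D') \<subseteq> E \<inter> D" using x z unfolding E_def by auto
  moreover have "x \<notin> D \<inter> D'" using x by auto
  moreover have "finite (E \<inter> D)" using fD by auto
  ultimately have i1: "card (D \<inter> D') < card (E \<inter> D)"
  proof -
    assume a: "insert x (D \<inter> D') \<subseteq> E \<inter> D" "x \<notin> D \<inter> D'" "finite (E \<inter> D)"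
    have "card (insert x (D \<inter> D')) = Suc (card (D \<inter> D'))" using a(2) fD by simp
    moreover have "card (insert x (D \<inter> D')) \<le> card (E \<inter> D)" using card_mono[OF a(3) a(1)] .
    ultimately show ?thesis by simp
  qed
  have "E \<inter> D' = D' - {z}" using x unfolding E_def by auto
  then have i2: "card (D \<inter> D') < card (E \<inter> D')" using cz small by auto
  show ?thesis using Ed cE i1 i2 by blast
qed

lemma close_pair:
  fixes \<tau> :: "'a set \<Rightarrow> 'b"
  assumes P: "is_poset Q"
  shows "\<And>D D'. n - card (D \<inter> D') = m \<Longrightarrow> is_downset Q D \<Longrightarrow> is_downset Q D' \<Longrightarrow>
    card D = n \<Longrightarrow> card D' = n \<Longrightarrow> \<tau> D \<noteq> \<tau> D' \<Longrightarrow>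
    \<exists>E E'. is_downset Q E \<and> is_downset Q E' \<and> card E = n \<and> card E' = n \<and> \<tau> E \<noteq> \<tau> E'
       \<and> n \<le> card (E \<inter> E') + 1"
proof (induction m rule: less_induct)
  case (less m D D')
  show ?case
  proof (cases "n \<le> card (D \<inter> D') + 1")
    case True
    then show ?thesis using less.prems by blast
  next
    case False
    then obtain E where E: "is_downset Q E" "card E = n" "card (D \<inter> D') < card (E \<inter> D)"
      "card (D \<inter> D') < card (E \<inter> D')"
      using swap[OF P less.prems(2,3,4,5)] by auto
    have fE: "finite E" using E(1) P unfolding is_downset_def is_poset_def by (meson finite_subset)
    have b1: "card (E \<inter> D) \<le> n" using E(2) fE by (metis card_mono inf_le1)
    have b2: "card (E \<inter> D') \<le> n" using E(2) fE by (metis card_mono inf_le1)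
    show ?thesis
    proof (cases "\<tau> E = \<tau> D")
      case False
      have "n - card (E \<inter> D) < m" using less.prems(1) E(3) b1 by linarith
      then show ?thesis using less.IH[OF _ refl E(1) less.prems(2) E(2) less.prems(4) False] by blast
    next
      case True
      then have ne: "\<tau> E \<noteq> \<tau> D'" using less.prems(6) by simp
      have "n - card (E \<inter> D') < m" using less.prems(1) E(4) b2 by linarith
      then show ?thesis using less.IH[OF _ refl E(1) less.prems(3) E(2) less.prems(5) ne] by blast
    qed
  qed
qed

lemma sub_down:
  assumes "is_downset Q W"
  shows "is_downset (subposet Q W) E \<longleftrightarrow> is_downset Q E \<and> E \<subseteq> W"
  using assms unfolding is_downset_def subposet_def by auto

lemma sub_sub: "subposet (subposet Q W) E = subposet Q E"
  by (simp add: subposet_def)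

lemma sub_witness:
  assumes w: "is_witness n \<Gamma> Q" and W: "is_downset Q W"
    and r: "\<forall>P\<in>\<Gamma>. \<exists>E. is_downset Q E \<and> E \<subseteq> W \<and> card E = n \<and> poset_iso (subposet Q E) P"
  shows "is_witness n \<Gamma> (subposet Q W)"
  unfolding is_witness_def sub_sub sub_down[OF W]
  using w r unfolding is_witness_def by blast

theorem mainTheorem11:
  fixes \<Gamma> :: "nat poset set" and Q :: "'a poset" and n k :: nat
  assumes "finite \<Gamma>" and "card \<Gamma> = k" and "k \<ge> 2"
    and "\<forall>P\<in>\<Gamma>. is_poset P \<and> card (fst P) = n"
    and "\<forall>P\<in>\<Gamma>. \<forall>P'\<in>\<Gamma>. poset_iso P P' \<longrightarrow> P = P'"
    and "is_poset Q"
    and "is_minimal_witness n \<Gamma> Q"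
  shows "card (fst Q) \<le> n * (k - 1) + 1"
proof -
  have wit: "is_witness n \<Gamma> Q" and mini: "\<And>D. is_downset Q D \<Longrightarrow> D \<noteq> fst Q \<Longrightarrow> \<not> is_witness n \<Gamma> (subposet Q D)"
    using assms(7) unfolding is_minimal_witness_def by blast+
  have w1: "\<And>D. is_downset Q D \<Longrightarrow> card D = n \<Longrightarrow> \<exists>P. P \<in> \<Gamma> \<and> poset_iso (subposet Q D) P"
    using wit unfolding is_witness_def by blast
  have w2: "\<And>P. P \<in> \<Gamma> \<Longrightarrow> \<exists>D. is_downset Q D \<and> card D = n \<and> poset_iso (subposet Q D) P"
    using wit unfolding is_witness_def by blast
  have finQ: "finite (fst Q)" using assms(6) unfolding is_poset_def by blast
  define \<tau> where "\<tau> D = (SOME P. P \<in> \<Gamma> \<and> poset_iso (subposet Q D) P)" for D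
  have tau: "\<tau> D \<in> \<Gamma> \<and> poset_iso (subposet Q D) (\<tau> D)" if "is_downset Q D" "card D = n" for D
    unfolding \<tau>_def using someI_ex[OF w1[OF that]] .
  have tau_u: "\<tau> D = P" if "is_downset Q D" "card D = n" "P \<in> \<Gamma>" "poset_iso (subposet Q D) P" for D P
  proof -
    have "poset_iso P (\<tau> D)" using iso_trans[OF iso_sym[OF that(4)]] tau[OF that(1,2)] by blast
    then show ?thesis using assms(5) that(3) tau[OF that(1,2)] by blast
  qed
  obtain P1 P2 where P12: "P1 \<in> \<Gamma>" "P2 \<in> \<Gamma>" "P1 \<noteq> P2"
  proof -
    have "card \<Gamma> \<ge> 2" using assms(2,3) by simp
    then have "\<Gamma> \<noteq> {}" by auto
    then obtain a where a: "a \<in> \<Gamma>" by blast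
    have "card (\<Gamma> - {a}) \<ge> 1" using a \<open>card \<Gamma> \<ge> 2\<close> assms(1) by simp
    then have "\<Gamma> - {a} \<noteq> {}" by (metis card.empty not_one_le_zero)
    then obtain b where "b \<in> \<Gamma>" "a \<noteq> b" by blast
    then have "a \<in> \<Gamma>" "b \<in> \<Gamma>" "a \<noteq> b" using a by auto
    then show ?thesis using that by blast
  qed
  obtain R1 where R1: "is_downset Q R1" "card R1 = n" "poset_iso (subposet Q R1) P1" using w2[OF P12(1)] by blast
  obtain R2 where R2: "is_downset Q R2" "card R2 = n" "poset_iso (subposet Q R2) P2" using w2[OF P12(2)] by blast
  have "\<tau> R1 \<noteq> \<tau> R2" using tau_u[OF R1(1,2) P12(1) R1(3)] tau_u[OF R2(1,2) P12(2) R2(3)] P12(3) by simp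
  then obtain D D' where DD: "is_downset Q D" "is_downset Q D'" "card D = n" "card D' = n"
     "\<tau> D \<noteq> \<tau> D'" "n \<le> card (D \<inter> D') + 1"
    using close_pair[OF assms(6) refl R1(1) R2(1) R1(2) R2(2)] by blast
  define \<rho> where "\<rho> P = (SOME E. is_downset Q E \<and> card E = n \<and> poset_iso (subposet Q E) P)" for P :: "nat poset"
  have rho: "is_downset Q (\<rho> P) \<and> card (\<rho> P) = n \<and> poset_iso (subposet Q (\<rho> P)) P" if "P \<in> \<Gamma>" for P
    unfolding \<rho>_def using someI_ex[OF w2[OF that]] .
  define \<Gamma>' where "\<Gamma>' = \<Gamma> - {\<tau> D, \<tau> D'}"
  define W where "W = D \<union> D' \<union> (\<Union>P\<in>\<Gamma>'. \<rho> P)"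
  have Wd: "is_downset Q W"
    unfolding is_downset_def
  proof (intro conjI ballI impI)
    show "W \<subseteq> fst Q" using DD(1,2) rho unfolding W_def \<Gamma>'_def is_downset_def by blast
  next
    fix x y assume x: "x \<in> W" and y: "y \<in> fst Q" "snd Q y x"
    show "y \<in> W"
    proof (cases "x \<in> D \<union> D'")
      case True
      then show ?thesis using DD(1,2) y unfolding W_def is_downset_def by blast
    next
      case False
      then obtain P where P: "P \<in> \<Gamma>'" "x \<in> \<rho> P" using x unfolding W_def by blast
      then have "is_downset Q (\<rho> P)" using rho unfolding \<Gamma>'_def by blast
      then have "y \<in> \<rho> P" using P y unfolding is_downset_def by blast
      then show ?thesis using P unfolding W_def by blast
    qed
  qed
  have Wr: "\<forall>P\<in>\<Gamma>. \<exists>E. is_downset Q E \<and> E \<subseteq> W \<and> card E = n \<and> poset_iso (subposet Q E) P"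
  proof
    fix P assume P: "P \<in> \<Gamma>"
    show "\<exists>E. is_downset Q E \<and> E \<subseteq> W \<and> card E = n \<and> poset_iso (subposet Q E) P"
    proof (cases "P = \<tau> D")
      case True
      then show ?thesis using tau[OF DD(1,3)] DD(1,3) unfolding W_def by blast
    next
      case f1: False
      show ?thesis
      proof (cases "P = \<tau> D'")
        case True
        then show ?thesis using tau[OF DD(2,4)] DD(2,4) unfolding W_def by blast
      next
        case False
        then have "P \<in> \<Gamma>'" using f1 P unfolding \<Gamma>'_def by blast
        then show ?thesis using rho[OF P] unfolding W_def by blast
      qed
    qed
  qed
  have "W = fst Q"
  proof (rule ccontr)
    assume "W \<noteq> fst Q"
    then show False using mini[OF Wd] sub_witness[OF wit Wd Wr] by blast
  qed
  have fDD: "finite D" "finite D'" using DD(1,2) finQ unfolding is_downset_def by (meson finite_subset)+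
  have cU: "card (D \<union> D') \<le> n + 1"
    using card_Un_Int[OF fDD] DD(3,4,6) by linarith
  have cG: "card \<Gamma>' = k - 2"
    unfolding \<Gamma>'_def using tau[OF DD(1,3)] tau[OF DD(2,4)] DD(5) assms(1,2) by (simp add: card_Diff_subset)
  have "card (\<Union>P\<in>\<Gamma>'. \<rho> P) \<le> (\<Sum>P\<in>\<Gamma>'. card (\<rho> P))" by (rule card_UN_le) (simp add: \<Gamma>'_def assms(1))
  also have "\<dots> = (\<Sum>P\<in>\<Gamma>'. n)" using rho unfolding \<Gamma>'_def by (intro sum.cong) auto
  also have "\<dots> = n * (k - 2)" using cG by simp
  finally have cV: "card (\<Union>P\<in>\<Gamma>'. \<rho> P) \<le> n * (k - 2)" .
  have "card W \<le> card (D \<union> D') + card (\<Union>P\<in>\<Gamma>'. \<rho> P)" unfolding W_def by (rule card_Un_le)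
  also have "\<dots> \<le> n + 1 + n * (k - 2)" using cU cV by linarith
  also have "\<dots> = n * (k - 1) + 1"
  proof -
    have "k - 1 = Suc (k - 2)" using assms(3) by simp
    then show ?thesis by simp
  qed
  finally show ?thesis using \<open>W = fst Q\<close> by simp
qed

end
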